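(* Let $\alpha=2\sqrt7-4$. For every $\varepsilon>0$ and every balanced tetrahedral erasure channel $W$ with $Q(W)>0$, there exists an integer $m>0$ such that for all $n\ge m$, every $n$th-generation descendant $W'$ of $W$ satisfies $Q(W')\ge\alpha-\varepsilon$ (i.e. $Q(W_n)\ge\alpha-\varepsilon$ for all $n\ge m$).
   Context: $\mathrm{TEC}(p,q,r,s,t)$ denotes a tetrahedral erasure channel with parameters $p,q,r,s,t\ge0$ summing to $1$. Its entropy is $H=\frac{q+r+s}{2}+t$, its edge mass is $E=q+r+s$, and its Quetelet index is $Q=E/(H(1-H))$ (defined when $0<H<1$). It is balanced if $q=r=s$. For $W=\mathrm{TEC}(p,q,r,s,t)$, the serial child is $W^{s}=\mathrm{TEC}(p^2,\ ps+sq+qp,\ pq+qr+rp,\ pr+rs+sp,\ 1-\text{(sum of the other four)})$ and the parallel child is $W^{p}=\mathrm{TEC}(1-\text{(sum of the other four)},\ ts+sq+qt,\ tq+qr+rt,\ tr+rs+st,\ t^2)$. The $0$th-generation descendant of $W$ is $W$; the $n$th-generation descendants are the children of the $(n-1)$th-generation descendants; $W_n$ denotes a random $n$th-generation descendant. *)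

theory Defs
  imports Complex_Main
begin

type_synonym tec = "real \<times> real \<times> real \<times> real \<times> real"

definition is_tec :: "tec \<Rightarrow> bool" where
  "is_tec W = (case W of (p,q,r,s,t) \<Rightarrow>
     p \<ge> 0 \<and> q \<ge> 0 \<and> r \<ge> 0 \<and> s \<ge> 0 \<and> t \<ge> 0 \<and> p + q + r + s + t = 1)"

definition tec_H :: "tec \<Rightarrow> real" where
  "tec_H W = (case W of (p,q,r,s,t) \<Rightarrow> (q + r + s) / 2 + t)"

definition tec_E :: "tec \<Rightarrow> real" where
  "tec_E W = (case W of (p,q,r,s,t) \<Rightarrow> q + r + s)"

definition tec_Q :: "tec \<Rightarrow> real" where
  "tec_Q W = tec_E W / (tec_H W * (1 - tec_H W))"

definition balanced :: "tec \<Rightarrow> bool" where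
  "balanced W = (case W of (p,q,r,s,t) \<Rightarrow> q = r \<and> r = s)"

definition serial_child :: "tec \<Rightarrow> tec" where
  "serial_child W = (case W of (p,q,r,s,t) \<Rightarrow>
     (let p' = p^2; q' = p*s + s*q + q*p; r' = p*q + q*r + r*p; s' = p*r + r*s + s*p
      in (p', q', r', s', 1 - (p' + q' + r' + s'))))"

definition parallel_child :: "tec \<Rightarrow> tec" where
  "parallel_child W = (case W of (p,q,r,s,t) \<Rightarrow>
     (let q' = t*s + s*q + q*t; r' = t*q + q*r + r*t; s' = t*r + r*s + s*t; t' = t^2
      in (1 - (q' + r' + s' + t'), q', r', s', t')))"

fun descendants :: "nat \<Rightarrow> tec \<Rightarrow> tec set" where
  "descendants 0 W = {W}"
| "descendants (Suc n) W =
     (\<Union>V \<in> descendants n W. {serial_child V, parallel_child V})"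

end

theory Submission
  imports Defs
begin


lemma concave_quad:
  fixes A B C s s0 s1 :: real
  assumes "A \<le> 0" "s0 \<le> s" "s \<le> s1" "s0 < s1"
    "A*s0^2 + B*s0 + C \<ge> 0" "A*s1^2 + B*s1 + C \<ge> 0"
  shows "A*s^2 + B*s + C \<ge> 0"
proof -
  have id: "(s1-s0)*(A*s^2 + B*s + C) = (s1-s)*(A*s0^2 + B*s0 + C) + (s-s0)*(A*s1^2 + B*s1 + C)
      + (s1-s0)*(A*((s-s0)*(s1-s)))*(-1)"
    by (simp add: algebra_simps power2_eq_square)
  have "(s1-s)*(A*s0^2 + B*s0 + C) \<ge> 0" using assms by simp
  moreover have "(s-s0)*(A*s1^2 + B*s1 + C) \<ge> 0" using assms by simp
  moreover have "A*((s-s0)*(s1-s)) \<le> 0" using assms by (simp add: mult_nonpos_nonneg)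
  moreover have "(s1-s0)*(A*((s-s0)*(s1-s)))*(-1) \<ge> 0" using calculation assms
    by (simp add: mult_nonneg_nonpos)
  ultimately have "(s1-s0)*(A*s^2 + B*s + C) \<ge> 0" using id by linarith
  moreover have "s1 - s0 > 0" using assms by simp
  ultimately show ?thesis by (simp add: zero_le_mult_iff)
qed

lemma phi_ident:
  fixes x u a :: real
  assumes "a^2 + 8*a = 12"
  shows "3*(2*u*(x-u)) - a*((x^2 - 3/4*u^2)*(1 - (x^2 - 3/4*u^2)))
    = (3*u - a*x*(1-x))*(x*(1+x) - (2 + a/4)*u) + a*u^2*(3/2*(1-x)*(1+x) + 9/16*u^2)"
proof -
  have "3*(2*u*(x-u)) - a*((x^2 - 3/4*u^2)*(1 - (x^2 - 3/4*u^2)))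
    = (3*u - a*x*(1-x))*(x*(1+x) - (2 + a/4)*u) + a*u^2*(3/2*(1-x)*(1+x) + 9/16*u^2)
     - (a^2 + 8*a - 12) * (x*(1-x)*u/4)"
    by (simp add: field_simps power2_eq_square power4_eq_xxxx)
  thus ?thesis using assms by simp
qed

lemma phi_step:
  fixes x u a :: real
  assumes a: "a^2 + 8*a = 12" "0 < a" "a < 2"
    and x: "0 < x" "x < 1" and u: "0 < u" "u \<le> 2*x/3"
    and phi: "3*u \<ge> a*x*(1-x)"
  shows "3*(2*u*(x-u)) - a*((x^2 - 3/4*u^2)*(1 - (x^2 - 3/4*u^2))) \<ge> 0"
proof -
  define y where "y = 1 - x"
  define b where "b = 2 + a/4"
  have y: "0 < y" using x y_def by simp
  have b: "b > 0" using a b_def by simp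
  define R where "R = (3*u - a*x*y)*(x*(1+x) - b*u) + a*u^2*(3/2*y*(1+x))"
  have eq: "3*(2*u*(x-u)) - a*((x^2 - 3/4*u^2)*(1 - (x^2 - 3/4*u^2))) = R + a*(9/16)*u^2*u^2"
    using phi_ident[OF a(1), of u x] unfolding R_def y_def b_def
    by (simp add: algebra_simps power2_eq_square)
  have t2: "a*(9/16)*u^2*u^2 \<ge> 0" using a by simp
  have "R \<ge> 0"
  proof (cases "x*(1+x) - b*u \<ge> 0")
    case True
    have "(3*u - a*x*y)*(x*(1+x) - b*u) \<ge> 0" using True phi y_def by simp
    moreover have "a*u^2*(3/2*y*(1+x)) \<ge> 0" using a y x by simp
    ultimately show ?thesis unfolding R_def by linarith
  next
    case False
    define A where "A = -3*b + 3/2*a*y*(1+x)"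
    define B where "B = 3*x*(1+x) + a*b*x*y"
    define C where "C = - a*x^2*y*(1+x)"
    define u0 where "u0 = x*(1+x)/b"
    define u1 where "u1 = 2*x/3"
    have RA: "R = A*u^2 + B*u + C"
      unfolding R_def A_def B_def C_def by (simp add: algebra_simps power2_eq_square)
    have "A \<le> 0"
    proof -
      have "y*(1+x) \<le> 2" using x y_def by (simp add: algebra_simps) (smt (verit) mult_le_one mult_nonneg_nonneg)
      hence "3/2*a*(y*(1+x)) \<le> 3*a" using a by simp
      hence "3/2*a*y*(1+x) \<le> 3*a" by (simp add: mult.assoc)
      moreover have "A = -6 - 3*a/4 + 3/2*a*y*(1+x)" unfolding A_def b_def by simp
      ultimately show ?thesis using a by linarith
    qed
    have u0u: "u0 < u" using False b unfolding u0_def by (simp add: field_simps)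
    have u0b: "b*u0 = x*(1+x)" unfolding u0_def using b by simp
    have "A*u0^2 + B*u0 + C = a*u0^2*(3/2*y*(1+x))"
    proof -
      have "A*u0^2 + B*u0 + C = (3*u0 - a*x*y)*(x*(1+x) - b*u0) + a*u0^2*(3/2*y*(1+x))"
        unfolding A_def B_def C_def by (simp add: algebra_simps power2_eq_square)
      thus ?thesis using u0b by simp
    qed
    moreover have "a*u0^2*(3/2*y*(1+x)) \<ge> 0" using a x y by simp
    ultimately have R0: "A*u0^2 + B*u0 + C \<ge> 0" by linarith
    have "A*u1^2 + B*u1 + C = x^2*((a/3)*x^2 + (8-4*a)/6) + x^2*(1-x)*(a^2+8*a-12)/6"
      unfolding A_def B_def C_def u1_def y_def b_def by (simp add: field_simps power2_eq_square)
    hence R1: "A*u1^2 + B*u1 + C \<ge> 0" using a by simp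
    have "A*u^2 + B*u + C \<ge> 0"
      using concave_quad[OF \<open>A \<le> 0\<close> less_imp_le[OF u0u] _ _ R0 R1] u u0u unfolding u1_def by linarith
    thus ?thesis using RA by simp
  qed
  thus ?thesis using eq t2 by linarith
qed

lemma serial_core:
  fixes p q t a :: real
  assumes a: "a^2 + 8*a = 12" "0 < a" "a < 2"
    and pqt: "p \<ge> 0" "q > 0" "t \<ge> 0" "p + 3*q + t = 1"
  defines "x \<equiv> p + 3/2*q" and "y \<equiv> 3/2*q + t"
    and "q' \<equiv> 2*p*q + q^2"
  defines "x' \<equiv> p^2 + 3/2*q'" and "y' \<equiv> 1 - p^2 - 3/2*q'"
  shows "x > 0" "y > 0" "x + y = 1" "q' > 0" "x' > 0" "y' > 0" "x' + y' = 1"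
    "y*(2-y) \<le> y'" "y' \<le> 3*y"
    "3*q \<ge> a*x*y \<Longrightarrow> 3*q' \<ge> a*x'*y'"
    "3*q \<le> a*x*y \<Longrightarrow> 3*q'/(x'*y') \<ge> 3*q/(x*y) + (3*q/(x*y))*(a - 3*q/(x*y))*y/(3*a)"
proof -
  show xp: "x > 0" using pqt unfolding x_def by simp
  show yp: "y > 0" using pqt unfolding y_def by simp
  show xy: "x + y = 1" using pqt unfolding x_def y_def by simp
  show q'p: "q' > 0"
  proof -
    have "2*p*q \<ge> 0" using pqt by simp
    moreover have "q^2 > 0" using pqt by simp
    ultimately show ?thesis unfolding q'_def by linarith
  qed
  show x'p: "x' > 0" using pqt q'p unfolding x'_def by (simp add: add_nonneg_pos)
  have x'eq: "x' = x^2 - 3/4*q^2" unfolding x'_def x_def q'_def by (simp add: algebra_simps power2_eq_square)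
  show x'y': "x' + y' = 1" unfolding x'_def y'_def by simp
  have x'le: "x' \<le> x^2" using x'eq by simp
  have x1: "x < 1" using xy yp by simp
  have "x*x < 1*1" using xp x1 by (intro mult_strict_mono) auto
  hence "x^2 < 1" by (simp add: power2_eq_square)
  hence "x' < 1" using x'le by simp
  thus y'p: "y' > 0" using x'y' by simp
  have yx: "y = 1 - x" using xy by simp
  have "y' = 1 - x'" using x'y' by simp
  hence y'eq: "y' = y*(1+x) + 3/4*q^2"
    unfolding x'eq yx by (simp add: algebra_simps power2_eq_square)
  have "y*(2-y) = y*(1+x)" using xy by (simp add: yx)
  moreover have "3/4*q^2 \<ge> 0" by simp
  ultimately show "y*(2-y) \<le> y'" using y'eq by linarith
  have qy: "q \<le> 2*y/3" using pqt unfolding y_def by simp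
  have qx: "q \<le> 2*x/3" using pqt unfolding x_def by simp
  have "q^2 \<le> (2*y/3)^2" using qy pqt by (simp add: power_mono)
  hence "3/4*q^2 \<le> y*y/3" by (simp add: power2_eq_square)
  moreover have "y*y \<le> y" using yp xy xp by (simp add: mult_le_one)
  moreover have "y*(1+x) \<le> 2*y" using yp x1 by simp
  ultimately show y'le: "y' \<le> 3*y" using y'eq yp by linarith
  have q'eq: "q' = 2*q*(x-q)" unfolding q'_def x_def by (simp add: algebra_simps power2_eq_square)
  show "3*q \<ge> a*x*y \<Longrightarrow> 3*q' \<ge> a*x'*y'"
  proof -
    assume h: "3*q \<ge> a*x*y"
    have "3*(2*q*(x-q)) - a*((x^2 - 3/4*q^2)*(1 - (x^2 - 3/4*q^2))) \<ge> 0"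
      using phi_step[OF a xp x1 pqt(2) qx] h unfolding yx by simp
    moreover have y'2: "y' = 1 - (x^2 - 3/4*q^2)" using x'eq x'y' by simp
    moreover have "3*q' - a*(x'*y') = 3*(2*q*(x-q)) - a*((x^2 - 3/4*q^2)*(1 - (x^2 - 3/4*q^2)))"
      by (simp only: q'eq x'eq y'2)
    ultimately show ?thesis by (simp add: mult.assoc)
  qed
  show "3*q \<le> a*x*y \<Longrightarrow> 3*q'/(x'*y') \<ge> 3*q/(x*y) + (3*q/(x*y))*(a - 3*q/(x*y))*y/(3*a)"
  proof -
    assume h: "3*q \<le> a*x*y"
    define v where "v = x*y"
    have vp: "v > 0" using xp yp v_def by simp
    define D where "D = 2*(x-q)*x*y - x'*y'"
    have Deq: "D = (v^2 - 2*q*v - 3/4*q^2) + (3/2*q^2*(1-x^2) + 9/16*q^2*q^2)"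
    proof -
      have y'1: "y' = 1 - x'" using x'y' by simp
      show ?thesis unfolding D_def v_def y'1 x'eq yx by (simp add: field_simps power2_eq_square)
    qed
    have avq: "a*v - 3*q \<ge> 0" using h v_def by simp
    have "a*(v^2 - 2*q*v - 3/4*q^2) = v*(a*v-3*q) + (a/4)*q*(a*v-3*q) - q*v*(a^2+8*a-12)/4"
      by (simp add: algebra_simps power2_eq_square add_divide_distrib diff_divide_distrib)
    moreover have "a^2+8*a-12 = 0" using a by simp
    ultimately have i1: "a*(v^2 - 2*q*v - 3/4*q^2) = v*(a*v-3*q) + (a/4)*q*(a*v-3*q)" by simp
    have i2: "(a/4)*q*(a*v-3*q) \<ge> 0" using a avq pqt by simp
    have "x^2 \<le> 1" using \<open>x^2 < 1\<close> by simp
    hence "3/2*q^2*(1-x^2) + 9/16*q^2*q^2 \<ge> 0" by simp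
    hence i3: "a*(3/2*q^2*(1-x^2) + 9/16*q^2*q^2) \<ge> 0" using a by simp
    have "a*D = a*(v^2 - 2*q*v - 3/4*q^2) + a*(3/2*q^2*(1-x^2) + 9/16*q^2*q^2)"
      unfolding Deq by (simp only: distrib_left)
    hence aD: "a*D \<ge> v*(a*v-3*q)" using i1 i2 i3 by linarith
    hence Dge: "D \<ge> v*(a*v-3*q)/a" using a by (simp add: pos_divide_le_eq mult.commute)
    have pp: "x'*y' > 0" using x'p y'p by simp
    have e1: "3*q'/(x'*y') = 3*q/v + 3*q*D/(v*(x'*y'))"
      unfolding D_def v_def q'eq using xp yp x'p y'p by (simp add: field_simps)
    have k1: "3*q*D/(v*(x'*y')) \<ge> 3*q*(v*(a*v-3*q)/a)/(v*(x'*y'))"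
      proof (rule divide_right_mono)
      show "3*q*(v*(a*v-3*q)/a) \<le> 3*q*D" using mult_left_mono[OF Dge, of "3*q"] pqt by simp
      show "0 \<le> v*(x'*y')" using vp pp by simp
    qed
    have k2: "3*q*(v*(a*v-3*q)/a)/(v*(x'*y')) = 3*q*(a*v-3*q)/(a*(x'*y'))"
      using vp a x'p y'p by (simp add: field_simps)
    have yx'y': "y*(x'*y') \<le> 3*v^2"
    proof -
      have "x'*y' \<le> x^2*(3*y)" using x'le y'le x'p y'p by (simp add: mult_mono)
      hence "y*(x'*y') \<le> y*(x^2*(3*y))" using yp by simp
      thus ?thesis unfolding v_def by (simp add: algebra_simps power2_eq_square)
    qed
    have k3: "3*q*(a*v-3*q)/(a*(x'*y')) \<ge> q*(a*v-3*q)*y/(a*v^2)"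
    proof -
      have "q*((a*v-3*q)*(y*(x'*y'))) \<le> 3*q*(a*v-3*q)*v^2"
      proof -
        have "q*(a*v-3*q) \<ge> 0" using pqt avq by simp
        hence "(q*(a*v-3*q))*(y*(x'*y')) \<le> (q*(a*v-3*q))*(3*v^2)"
          using yx'y' by (simp add: mult_left_mono)
        thus ?thesis by (simp add: algebra_simps)
      qed
      thus ?thesis using a pp vp by (simp add: divide_simps)
    qed
    have e2: "3*q/(x*y) + (3*q/(x*y))*(a - 3*q/(x*y))*y/(3*a) = 3*q/v + q*(a*v-3*q)*y/(a*v^2)"
      unfolding v_def using xp yp a by (simp add: field_simps power2_eq_square)
    show ?thesis unfolding e2 e1 using k1 k2 k3 by linarith
  qed
qed


definition al :: real where "al = 2 * sqrt 7 - 4"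

lemma al_props: "al^2 + 8*al = 12" "0 < al" "al < 2"
proof -
  have s7: "sqrt 7 ^ 2 = 7" by simp
  show "al^2 + 8*al = 12" unfolding al_def by (simp add: algebra_simps power2_eq_square)
  have "2 < sqrt 7" by (rule real_less_rsqrt) simp
  thus "0 < al" unfolding al_def by simp
  have "sqrt 7 < sqrt 9" by (rule real_sqrt_less_mono) simp
  moreover have "sqrt 9 = 3" by (rule real_sqrt_unique) auto
  ultimately have "sqrt 7 < 3" by simp
  thus "al < 2" unfolding al_def by simp
qed

definition good :: "tec \<Rightarrow> bool" where
  "good V = (is_tec V \<and> balanced V \<and> 0 < tec_H V \<and> tec_H V < 1 \<and> tec_Q V > 0)"

lemma H_rep: "tec_H (p,q,q,q,t) = 3/2*q + t" by (simp add: tec_H_def)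

lemma Q_rep: assumes "p + 3*q + t = 1" shows "tec_Q (p,q,q,q,t) = 3*q/((p + 3/2*q)*(3/2*q + t))"
proof -
  have "1 - (3/2*q + t) = p + 3/2*q" using assms by simp
  hence "tec_Q (p,q,q,q,t) = 3*q/((3/2*q + t)*(p + 3/2*q))"
    unfolding tec_Q_def H_rep by (simp add: tec_E_def)
  thus ?thesis by (simp add: mult.commute)
qed

lemma good_rep:
  assumes "good V"
  obtains p q t where "V = (p,q,q,q,t)" "p \<ge> 0" "q > 0" "t \<ge> 0" "p + 3*q + t = 1"
proof -
  obtain p q r s t where V: "V = (p,q,r,s,t)" by (cases V) auto
  have "q = r" "r = s" using assms V by (auto simp: good_def balanced_def)
  hence V2: "V = (p,q,q,q,t)" using V by simp
  have tec: "p \<ge> 0" "q \<ge> 0" "t \<ge> 0" "p + 3*q + t = 1"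
    using assms V2 by (auto simp: good_def is_tec_def)
  have H: "0 < 3/2*q + t" "3/2*q + t < 1" using assms V2 by (auto simp: good_def H_rep)
  have "tec_Q V > 0" using assms by (simp add: good_def)
  hence "3*q/((p + 3/2*q)*(3/2*q + t)) > 0" using Q_rep[OF tec(4)] V2 by simp
  moreover have "(p + 3/2*q)*(3/2*q + t) > 0" using H tec by simp
  ultimately have "q > 0" using tec by (simp add: zero_less_divide_iff)
  thus ?thesis using that V2 tec by blast
qed

lemma sc_rep: "serial_child (p,q,q,q,t) = (p^2, 2*p*q+q^2, 2*p*q+q^2, 2*p*q+q^2, 1 - (p^2 + 3*(2*p*q+q^2)))"
  by (simp add: serial_child_def Let_def algebra_simps power2_eq_square)

lemma serial_facts:
  assumes g: "good V"
  shows "good (serial_child V)"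
    "tec_H V * (2 - tec_H V) \<le> tec_H (serial_child V)"
    "tec_H (serial_child V) \<le> 3 * tec_H V"
    "tec_Q V \<ge> al \<Longrightarrow> tec_Q (serial_child V) \<ge> al"
    "tec_Q V \<le> al \<Longrightarrow> tec_Q (serial_child V) \<ge> tec_Q V + tec_Q V * (al - tec_Q V) * tec_H V / (3*al)"
proof -
  obtain p q t where V: "V = (p,q,q,q,t)" and pqt: "p \<ge> 0" "q > 0" "t \<ge> 0" "p + 3*q + t = 1"
    using good_rep[OF g] by blast
  define x where "x = p + 3/2*q"
  define y where "y = 3/2*q + t"
  define q' where "q' = 2*p*q + q^2"
  define x' where "x' = p^2 + 3/2*q'"
  define y' where "y' = 1 - p^2 - 3/2*q'"
  note C = serial_core[OF al_props pqt, folded x_def y_def q'_def, folded x'_def y'_def]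
  have HV: "tec_H V = y" unfolding V H_rep y_def by simp
  have QV: "tec_Q V = 3*q/(x*y)" unfolding V Q_rep[OF pqt(4)] x_def y_def by simp
  have scV: "serial_child V = (p^2, q', q', q', 1 - (p^2 + 3*q'))" unfolding V sc_rep q'_def by simp
  have sum': "p^2 + 3*q' + (1 - (p^2 + 3*q')) = 1" by simp
  have HS: "tec_H (serial_child V) = y'" unfolding scV H_rep y'_def by simp
  have QS: "tec_Q (serial_child V) = 3*q'/(x'*y')"
    unfolding scV Q_rep[OF sum'] x'_def y'_def by (simp add: algebra_simps)
  have xy: "x*y > 0" using C by simp
  have x'y': "x'*y' > 0" using C by simp
  show "good (serial_child V)"
  proof -
    have "1 - (p^2 + 3*q') = y' - 3/2*q'" unfolding y'_def by simp
    moreover have "y' - 3/2*q' \<ge> 0"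
    proof -
      have "1 = (p+3*q+t)^2" using pqt(4) by simp
      hence "y' - 3/2*q' = (p+3*q+t)^2 - p^2 - 3*q'" unfolding y'_def by simp
      also have "\<dots> = 6*q^2 + t^2 + 2*p*t + 6*q*t"
        unfolding q'_def by (simp add: algebra_simps power2_eq_square)
      finally have "y' - 3/2*q' = 6*q^2 + t^2 + 2*p*t + 6*q*t" .
      thus ?thesis using pqt by simp
    qed
    ultimately have "is_tec (serial_child V)" unfolding scV is_tec_def using C(4) by simp
    moreover have "balanced (serial_child V)" unfolding scV balanced_def by simp
    moreover have "tec_Q (serial_child V) > 0" unfolding QS using C x'y' by simp
    moreover have "0 < tec_H (serial_child V)" "tec_H (serial_child V) < 1" unfolding HS using C by auto
    ultimately show ?thesis unfolding good_def by simp
  qed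
  show "tec_H V * (2 - tec_H V) \<le> tec_H (serial_child V)" unfolding HV HS using C by simp
  show "tec_H (serial_child V) \<le> 3 * tec_H V" unfolding HV HS using C by simp
  show "tec_Q V \<ge> al \<Longrightarrow> tec_Q (serial_child V) \<ge> al"
  proof -
    assume "tec_Q V \<ge> al"
    hence "3*q \<ge> al*x*y" unfolding QV using xy by (simp add: le_divide_eq mult.assoc)
    hence "3*q' \<ge> al*x'*y'" using C by simp
    thus ?thesis unfolding QS using x'y' by (simp add: le_divide_eq mult.assoc)
  qed
  show "tec_Q V \<le> al \<Longrightarrow> tec_Q (serial_child V) \<ge> tec_Q V + tec_Q V * (al - tec_Q V) * tec_H V / (3*al)"
  proof -
    assume "tec_Q V \<le> al"
    hence "3*q \<le> al*x*y" unfolding QV using xy by (simp add: divide_le_eq mult.assoc)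
    hence "3*q'/(x'*y') \<ge> 3*q/(x*y) + (3*q/(x*y))*(al - 3*q/(x*y))*y/(3*al)" using C by simp
    thus ?thesis unfolding QS QV HV .
  qed
qed


definition mir :: "tec \<Rightarrow> tec" where
  "mir V = (case V of (p,q,r,s,t) \<Rightarrow> (t,q,r,s,p))"

lemma mir_H: "is_tec V \<Longrightarrow> tec_H (mir V) = 1 - tec_H V"
  by (cases V) (auto simp: mir_def tec_H_def is_tec_def algebra_simps)

lemma mir_Q: "is_tec V \<Longrightarrow> tec_Q (mir V) = tec_Q V"
proof -
  assume "is_tec V"
  hence "tec_H (mir V) = 1 - tec_H V" by (rule mir_H)
  moreover have "tec_E (mir V) = tec_E V" by (cases V) (auto simp: mir_def tec_E_def)
  ultimately show ?thesis unfolding tec_Q_def by (simp add: mult.commute)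
qed

lemma mir_good: "good V \<Longrightarrow> good (mir V)"
proof -
  assume g: "good V"
  hence t: "is_tec V" by (simp add: good_def)
  have "is_tec (mir V)" using t by (cases V) (auto simp: mir_def is_tec_def)
  moreover have "balanced (mir V)" using g by (cases V) (auto simp: mir_def balanced_def good_def)
  ultimately show ?thesis using g mir_H[OF t] mir_Q[OF t] by (simp add: good_def)
qed

lemma pc_mir: "parallel_child V = mir (serial_child (mir V))"
  by (cases V) (simp add: parallel_child_def serial_child_def mir_def Let_def)

lemma parallel_facts:
  assumes g: "good V"
  shows "good (parallel_child V)"
    "(1 - tec_H V) * (2 - (1 - tec_H V)) \<le> 1 - tec_H (parallel_child V)"
    "1 - tec_H (parallel_child V) \<le> 3 * (1 - tec_H V)"
    "tec_Q V \<ge> al \<Longrightarrow> tec_Q (parallel_child V) \<ge> al"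
    "tec_Q V \<le> al \<Longrightarrow> tec_Q (parallel_child V) \<ge> tec_Q V + tec_Q V * (al - tec_Q V) * (1 - tec_H V) / (3*al)"
proof -
  have gm: "good (mir V)" using mir_good[OF g] .
  note S = serial_facts[OF gm]
  have tV: "is_tec V" using g by (simp add: good_def)
  have tm: "is_tec (mir V)" using gm by (simp add: good_def)
  have ts: "is_tec (serial_child (mir V))" using S(1) by (simp add: good_def)
  have H1: "tec_H (mir V) = 1 - tec_H V" using mir_H[OF tV] .
  have Q1: "tec_Q (mir V) = tec_Q V" using mir_Q[OF tV] .
  have H2: "tec_H (parallel_child V) = 1 - tec_H (serial_child (mir V))"
    unfolding pc_mir using mir_H[OF ts] .
  have Q2: "tec_Q (parallel_child V) = tec_Q (serial_child (mir V))"
    unfolding pc_mir using mir_Q[OF ts] .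
  show "good (parallel_child V)" unfolding pc_mir using mir_good[OF S(1)] .
  show "(1 - tec_H V) * (2 - (1 - tec_H V)) \<le> 1 - tec_H (parallel_child V)"
    using S(2) H1 H2 by simp
  show "1 - tec_H (parallel_child V) \<le> 3 * (1 - tec_H V)" using S(3) H1 H2 by simp
  show "tec_Q V \<ge> al \<Longrightarrow> tec_Q (parallel_child V) \<ge> al" using S(4) Q1 Q2 by simp
  show "tec_Q V \<le> al \<Longrightarrow> tec_Q (parallel_child V) \<ge> tec_Q V + tec_Q V * (al - tec_Q V) * (1 - tec_H V) / (3*al)"
    using S(5) Q1 Q2 H1 by simp
qed

lemma desc_Suc: "descendants (Suc n) V = descendants n (serial_child V) \<union> descendants n (parallel_child V)"
proof (induction n arbitrary: V)
  case 0
  then show ?case by auto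
next
  case (Suc n)
  have "descendants (Suc (Suc n)) V = (\<Union>U \<in> descendants (Suc n) V. {serial_child U, parallel_child U})"
    by simp
  also have "\<dots> = (\<Union>U \<in> descendants n (serial_child V) \<union> descendants n (parallel_child V). {serial_child U, parallel_child U})"
    using Suc.IH by simp
  also have "\<dots> = descendants (Suc n) (serial_child V) \<union> descendants (Suc n) (parallel_child V)"
    by auto
  finally show ?case .
qed

lemma desc_good: "good V \<Longrightarrow> W \<in> descendants n V \<Longrightarrow> good W"
proof (induction n arbitrary: W)
  case 0 thus ?case by simp
next
  case (Suc n)
  then obtain U where "U \<in> descendants n V" "W = serial_child U \<or> W = parallel_child U" by auto
  thus ?case using Suc serial_facts(1) parallel_facts(1) by blast
qed

lemma Q_nonneg_child:
  assumes "good V" "c \<le> al" "tec_Q V \<ge> c"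
  shows "tec_Q (serial_child V) \<ge> c" "tec_Q (parallel_child V) \<ge> c"
proof -
  have Qp: "tec_Q V > 0" "0 < tec_H V" "tec_H V < 1" using assms by (auto simp: good_def)
  have a: "al > 0" using al_props by simp
  show "tec_Q (serial_child V) \<ge> c"
  proof (cases "tec_Q V \<ge> al")
    case True thus ?thesis using serial_facts(4)[OF assms(1)] assms by linarith
  next
    case False
    have "tec_Q V * (al - tec_Q V) * tec_H V / (3*al) \<ge> 0" using Qp False a by simp
    thus ?thesis using serial_facts(5)[OF assms(1)] False assms by linarith
  qed
  show "tec_Q (parallel_child V) \<ge> c"
  proof (cases "tec_Q V \<ge> al")
    case True thus ?thesis using parallel_facts(4)[OF assms(1)] assms by linarith
  next
    case False
    have "tec_Q V * (al - tec_Q V) * (1 - tec_H V) / (3*al) \<ge> 0" using Qp False a by simp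
    thus ?thesis using parallel_facts(5)[OF assms(1)] False assms by linarith
  qed
qed

lemma desc_inv: "good V \<Longrightarrow> c \<le> al \<Longrightarrow> tec_Q V \<ge> c \<Longrightarrow> W \<in> descendants n V \<Longrightarrow> tec_Q W \<ge> c"
proof (induction n arbitrary: W)
  case 0 thus ?case by simp
next
  case (Suc n)
  then obtain U where U: "U \<in> descendants n V" "W = serial_child U \<or> W = parallel_child U" by auto
  have "good U" using desc_good Suc.prems U by blast
  moreover have "tec_Q U \<ge> c" using Suc U by blast
  ultimately show ?case using U(2) Q_nonneg_child Suc.prems by blast
qed


lemma tail_false:
  fixes H :: "nat \<Rightarrow> real" and b :: "nat \<Rightarrow> bool"
  assumes tail: "\<And>n. n \<ge> N \<Longrightarrow> (b n \<longrightarrow> H n < 1/6) \<and> (\<not> b n \<longrightarrow> 1 - H n < 1/6)"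
    and step: "\<And>n. b n \<Longrightarrow> H n * (2 - H n) \<le> H (Suc n) \<and> H (Suc n) \<le> 3 * H n"
    and pos: "\<And>n. 0 < H n"
    and bN: "b N"
  shows False
proof -
  have claim: "b (N+j) \<and> H (N+j) \<ge> (3/2)^j * H N" for j
  proof (induction j)
    case 0 thus ?case using bN by simp
  next
    case (Suc j)
    have b: "b (N+j)" using Suc by simp
    have h6: "H (N+j) < 1/6" using tail[of "N+j"] b by simp
    have st: "H (N+j) * (2 - H (N+j)) \<le> H (Suc (N+j))" "H (Suc (N+j)) \<le> 3 * H (N+j)"
      using step[OF b] by auto
    have "H (Suc (N+j)) < 1/2" using st h6 by linarith
    hence b': "b (N + Suc j)" using tail[of "N + Suc j"] by auto
    have "H (N+j) * (2 - H (N+j)) \<ge> H (N+j) * (3/2)" using h6 pos[of "N+j"]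
      by (intro mult_left_mono) auto
    hence A: "H (Suc (N+j)) \<ge> (3/2) * H (N+j)" using st by simp
    have B: "(3/2) * H (N+j) \<ge> (3/2) * ((3/2)^j * H N)" using Suc.IH by (intro mult_left_mono) auto
    have eqp: "(3/2::real)^(Suc j) * H N = (3/2) * ((3/2)^j * H N)" by simp
    have "H (Suc (N+j)) \<ge> (3/2)^(Suc j) * H N" using A B eqp by linarith
    hence "H (N + Suc j) \<ge> (3/2)^(Suc j) * H N" by simp
    thus ?case using b' by simp
  qed
  obtain j where j: "1 / (6 * H N) < (3/2::real)^j" using real_arch_pow[of "3/2::real" "1 / (6 * H N)"] by auto
  have "H (N+j) < 1/6" using claim[of j] tail[of "N+j"] by simp
  moreover have "(3/2)^j * H N > 1/6"
    using j pos[of N] by (simp add: divide_less_eq mult.commute)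
  ultimately show False using claim[of j] by linarith
qed

lemma path_false:
  fixes Q H :: "nat \<Rightarrow> real" and b :: "nat \<Rightarrow> bool" and c a :: real
  assumes a: "a > 0" and eps: "\<epsilon> > 0"
    and Qle: "\<And>n. Q n \<le> a - \<epsilon>" and Q0: "Q 0 > 0"
    and H: "\<And>n. 0 < H n \<and> H n < 1"
    and ser: "\<And>n. b n \<Longrightarrow> Q (Suc n) \<ge> Q n + Q n * (a - Q n) * H n / (3*a)
                 \<and> H n * (2 - H n) \<le> H (Suc n) \<and> H (Suc n) \<le> 3 * H n"
    and par: "\<And>n. \<not> b n \<Longrightarrow> Q (Suc n) \<ge> Q n + Q n * (a - Q n) * (1 - H n) / (3*a)
                 \<and> (1 - H n) * (2 - (1 - H n)) \<le> 1 - H (Suc n) \<and> 1 - H (Suc n) \<le> 3 * (1 - H n)"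
  shows False
proof -
  define k where "k = Q 0 * \<epsilon> / (3*a)"
  have kp: "k > 0" unfolding k_def using Q0 eps a by simp
  have inc_gen: "Q n \<ge> Q 0 \<Longrightarrow> Q (Suc n) - Q n \<ge> k * (if b n then H n else 1 - H n)" for n
  proof -
    assume q0: "Q n \<ge> Q 0"
    have "Q n * (a - Q n) \<ge> Q 0 * \<epsilon>"
      using q0 Qle[of n] Q0 eps by (intro mult_mono) auto
    hence m: "Q n * (a - Q n) / (3*a) \<ge> k" unfolding k_def using a by (simp add: divide_right_mono)
    show ?thesis
    proof (cases "b n")
      case True
      have "Q n * (a - Q n) * H n / (3*a) = (Q n * (a - Q n) / (3*a)) * H n" by simp
      also have "\<dots> \<ge> k * H n" using mult_right_mono[OF m, of "H n"] H[of n] by linarith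
      finally show ?thesis using ser[OF True] True by simp
    next
      case False
      have "Q n * (a - Q n) * (1 - H n) / (3*a) = (Q n * (a - Q n) / (3*a)) * (1 - H n)" by simp
      also have "\<dots> \<ge> k * (1 - H n)" using mult_right_mono[OF m, of "1 - H n"] H[of n] by linarith
      finally show ?thesis using par[OF False] False by simp
    qed
  qed
  have mono0: "Q n \<ge> Q 0 \<and> Q (Suc n) \<ge> Q n" for n
  proof (induction n)
    case 0
    have "k * (if b 0 then H 0 else 1 - H 0) \<ge> 0" using kp H[of 0] by simp
    thus ?case using inc_gen[of 0] by simp
  next
    case (Suc n)
    hence q: "Q (Suc n) \<ge> Q 0" by simp
    have "k * (if b (Suc n) then H (Suc n) else 1 - H (Suc n)) \<ge> 0" using kp H[of "Suc n"] by simp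
    thus ?case using inc_gen[OF q] q by simp
  qed
  have inc: "incseq Q" using mono0 by (simp add: incseq_SucI)
  have bdd: "bdd_above (range Q)" by (rule bdd_aboveI[where M="a-\<epsilon>"]) (auto simp: Qle)
  define L where "L = (SUP n. Q n)"
  have QL: "Q n \<le> L" for n unfolding L_def using cSUP_upper[OF _ bdd, of n] by simp
  obtain N where N: "Q N > L - k/6"
  proof -
    have "L - k/6 < L" using kp by simp
    then obtain N where "L - k/6 < Q N" unfolding L_def using less_cSUP_iff[OF _ bdd] by blast
    thus ?thesis using that by simp
  qed
  have tail: "(b n \<longrightarrow> H n < 1/6) \<and> (\<not> b n \<longrightarrow> 1 - H n < 1/6)" if "n \<ge> N" for n
  proof -
    have "Q (Suc n) - Q n < k/6" using QL[of "Suc n"] N incseqD[OF inc that] by linarith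
    moreover have "k * (if b n then H n else 1 - H n) \<le> Q (Suc n) - Q n"
      using inc_gen[of n] mono0[of n] by blast
    ultimately have "k * (if b n then H n else 1 - H n) < k * (1/6)" by linarith
    hence "(if b n then H n else 1 - H n) < 1/6" using kp by (simp only: mult_less_cancel_left_pos)
    thus ?thesis by (cases "b n") auto
  qed
  show False
  proof (cases "b N")
    case True
    show False
      by (rule tail_false[of N b H]) (use tail ser H True in auto)
  next
    case False
    show False
    proof (rule tail_false[of N "\<lambda>n. \<not> b n" "\<lambda>n. 1 - H n"])
      show "\<And>n. N \<le> n \<Longrightarrow> (\<not> b n \<longrightarrow> 1 - H n < 1 / 6) \<and> (\<not> \<not> b n \<longrightarrow> 1 - (1 - H n) < 1 / 6)"
        using tail by auto
      show "\<And>n. \<not> b n \<Longrightarrow> (1 - H n) * (2 - (1 - H n)) \<le> 1 - H (Suc n) \<and> 1 - H (Suc n) \<le> 3 * (1 - H n)"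
        using par by auto
      show "\<And>n. 0 < 1 - H n" using H by auto
      show "\<not> b N" using False .
    qed
  qed
qed


fun kpath :: "(tec \<Rightarrow> bool) \<Rightarrow> tec \<Rightarrow> nat \<Rightarrow> tec" where
  "kpath B V 0 = V"
| "kpath B V (Suc n) = (if B (serial_child (kpath B V n)) then serial_child (kpath B V n)
                        else parallel_child (kpath B V n))"

theorem mainTheorem8:
  fixes \<epsilon> :: real and W :: tec
  assumes "\<epsilon> > 0"
    and "is_tec W"
    and "balanced W"
    and "0 < tec_H W" and "tec_H W < 1"
    and "tec_Q W > 0"
  shows "\<exists>m::nat. m > 0 \<and> (\<forall>n \<ge> m. \<forall>W' \<in> descendants n W.
           tec_Q W' \<ge> 2 * sqrt 7 - 4 - \<epsilon>)"
proof (rule ccontr)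
  assume neg: "\<not> ?thesis"
  have aeq: "2 * sqrt 7 - 4 = al" by (simp add: al_def)
  define c where "c = al - \<epsilon>"
  have cal: "c \<le> al" unfolding c_def using assms(1) by simp
  have gW: "good W" using assms by (simp add: good_def)
  define bad where "bad V = (\<forall>m. \<exists>n\<ge>m. \<exists>W'\<in>descendants n V. tec_Q W' < c)" for V
  have badW: "bad W"
    unfolding bad_def
  proof
    fix m
    have "\<exists>n \<ge> max m 1. \<exists>W' \<in> descendants n W. \<not> tec_Q W' \<ge> c"
      using neg unfolding aeq c_def by (metis max.cobounded2 less_le_trans zero_less_one)
    thus "\<exists>n\<ge>m. \<exists>W'\<in>descendants n W. tec_Q W' < c" by (auto simp: not_le)
  qed
  have bad_child: "bad (serial_child V) \<or> bad (parallel_child V)" if bV: "bad V" for V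
  proof (rule ccontr)
    assume "\<not> (bad (serial_child V) \<or> bad (parallel_child V))"
    then obtain m1 m2 where
      m1: "\<forall>n\<ge>m1. \<forall>W'\<in>descendants n (serial_child V). tec_Q W' \<ge> c" and
      m2: "\<forall>n\<ge>m2. \<forall>W'\<in>descendants n (parallel_child V). tec_Q W' \<ge> c"
      unfolding bad_def by (auto simp: not_less)
    obtain n W' where n: "n \<ge> Suc (max m1 m2)" "W' \<in> descendants n V" "tec_Q W' < c"
      using bV unfolding bad_def by blast
    obtain n' where n': "n = Suc n'" using n(1) by (cases n) auto
    have "W' \<in> descendants n' (serial_child V) \<union> descendants n' (parallel_child V)"
      using n(2) n' desc_Suc[of n' V] by (simp del: descendants.simps)
    moreover have "n' \<ge> m1" "n' \<ge> m2" using n(1) n' by auto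
    ultimately show False using m1 m2 n(3) by (auto simp: not_less[symmetric])
  qed
  have bad_lt: "tec_Q V < c" if "good V" "bad V" for V
  proof (rule ccontr)
    assume "\<not> tec_Q V < c"
    hence "tec_Q V \<ge> c" by simp
    hence "\<forall>n. \<forall>W'\<in>descendants n V. tec_Q W' \<ge> c" using desc_inv[OF that(1) cal] by blast
    thus False using that(2) unfolding bad_def by (meson not_less order_refl)
  qed
  define P where "P = kpath bad W"
  have gb: "good (P n) \<and> bad (P n)" for n
  proof (induction n)
    case 0 thus ?case using gW badW by (simp add: P_def)
  next
    case (Suc n)
    show ?case
    proof (cases "bad (serial_child (P n))")
      case True
      hence "P (Suc n) = serial_child (P n)" by (simp add: P_def)
      thus ?thesis using True serial_facts(1) Suc by simp
    next
      case False
      hence "P (Suc n) = parallel_child (P n)" by (simp add: P_def)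
      moreover have "bad (parallel_child (P n))" using False bad_child Suc by blast
      ultimately show ?thesis using parallel_facts(1) Suc by simp
    qed
  qed
  have a: "al > 0" using al_props by simp
  show False
  proof (rule path_false[OF a assms(1), of "\<lambda>n. tec_Q (P n)" "\<lambda>n. tec_H (P n)" "\<lambda>n. bad (serial_child (P n))"])
    show "\<And>n. tec_Q (P n) \<le> al - \<epsilon>" using gb bad_lt unfolding c_def by (meson less_imp_le)
    show "0 < tec_Q (P 0)" using gb[of 0] by (simp add: good_def)
    show "\<And>n. 0 < tec_H (P n) \<and> tec_H (P n) < 1" using gb by (simp add: good_def)
  next
    fix n
    assume b: "bad (serial_child (P n))"
    hence e: "P (Suc n) = serial_child (P n)" by (simp add: P_def)
    have g: "good (P n)" using gb by simp
    have "tec_Q (P n) \<le> al" using bad_lt[OF g] gb cal by (meson less_imp_le order_trans)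
    thus "tec_Q (P (Suc n)) \<ge> tec_Q (P n) + tec_Q (P n) * (al - tec_Q (P n)) * tec_H (P n) / (3*al)
          \<and> tec_H (P n) * (2 - tec_H (P n)) \<le> tec_H (P (Suc n)) \<and> tec_H (P (Suc n)) \<le> 3 * tec_H (P n)"
      unfolding e using serial_facts[OF g] by simp
  next
    fix n
    assume b: "\<not> bad (serial_child (P n))"
    hence e: "P (Suc n) = parallel_child (P n)" by (simp add: P_def)
    have g: "good (P n)" using gb by simp
    have "tec_Q (P n) \<le> al" using bad_lt[OF g] gb cal by (meson less_imp_le order_trans)
    thus "tec_Q (P (Suc n)) \<ge> tec_Q (P n) + tec_Q (P n) * (al - tec_Q (P n)) * (1 - tec_H (P n)) / (3*al)
          \<and> (1 - tec_H (P n)) * (2 - (1 - tec_H (P n))) \<le> 1 - tec_H (P (Suc n))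
          \<and> 1 - tec_H (P (Suc n)) \<le> 3 * (1 - tec_H (P n))"
      unfolding e using parallel_facts[OF g] by simp
  qed
qed

end
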